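(* Let $G=(V,E)$ be a graph, $d\geq 1$, and let $u,v,w\in V$ be distinct vertices. Suppose that $u\in N_G(v)\subseteq N_G(w)\cup\{w\}$ and that $uw$ is an $\mathcal{R}_d$-bridge in $G$. Then $uv$ is an $\mathcal{R}_d$-bridge in $G-w$.
   Context: For a graph $G$, the $d$-dimensional generic rigidity matroid $\mathcal{R}_d(G)$ is the matroid on $E(G)$ given by linear independence of the rows of the rigidity matrix of a generic $d$-dimensional framework $(G,p)$ (positions with coordinates algebraically independent over $\mathbb{Q}$); it depends only on $G$. Its rank function is $r_d$, and for a graph $H$ we write $r_d(H)$ for the rank of $E(H)$. An edge $e$ of $G$ is an $\mathcal{R}_d$-bridge of $G$ if $r_d(G-e)=r_d(G)-1$. $N_G(x)$ denotes the neighbourhood of $x$. *)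

theory Defs
  imports Main "HOL.Rat" Complex_Main
begin

definition simple_graph :: "'a set \<Rightarrow> 'a set set \<Rightarrow> bool" where
  "simple_graph V E \<longleftrightarrow> finite V \<and>
     (\<forall>e\<in>E. \<exists>x y. x \<noteq> y \<and> x \<in> V \<and> y \<in> V \<and> e = {x, y})"

definition nbhd :: "'a set set \<Rightarrow> 'a \<Rightarrow> 'a set" where
  "nbhd E x = {y. {x, y} \<in> E}"

text \<open>A multivariate polynomial with rational coefficients in the variables S is
  represented as a finitely supported coefficient function on exponent vectors
  (monomials) supported in S.\<close>
definition alg_indep_rat :: "'b set \<Rightarrow> ('b \<Rightarrow> real) \<Rightarrow> bool" where
  "alg_indep_rat S x \<longleftrightarrow>
     (\<forall>P :: ('b \<Rightarrow> nat) \<Rightarrow> rat.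
        finite {m. P m \<noteq> 0} \<and>
        (\<forall>m. P m \<noteq> 0 \<longrightarrow> (\<forall>b. b \<notin> S \<longrightarrow> m b = 0)) \<and>
        (\<Sum>m\<in>{m. P m \<noteq> 0}. of_rat (P m) * (\<Prod>b\<in>S. x b ^ m b)) = 0
        \<longrightarrow> (\<forall>m. P m = 0))"

definition generic :: "nat \<Rightarrow> 'a set \<Rightarrow> ('a \<Rightarrow> nat \<Rightarrow> real) \<Rightarrow> bool" where
  "generic d V p \<longleftrightarrow> alg_indep_rat (V \<times> {..<d}) (\<lambda>(v, i). p v i)"

text \<open>Row of the rigidity matrix for the edge e = {x,y}: entry at column (x,i)
  is p x i - p y i, at (y,i) it is p y i - p x i, zero elsewhere.\<close>
definition rig_row :: "('a \<Rightarrow> nat \<Rightarrow> real) \<Rightarrow> 'a set \<Rightarrow> 'a \<Rightarrow> nat \<Rightarrow> real" where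
  "rig_row p e z i = (if z \<in> e then (\<Sum>w\<in>e - {z}. p z i - p w i) else 0)"

definition rig_indep :: "nat \<Rightarrow> ('a \<Rightarrow> nat \<Rightarrow> real) \<Rightarrow> 'a set set \<Rightarrow> bool" where
  "rig_indep d p F \<longleftrightarrow>
     (\<forall>c :: 'a set \<Rightarrow> real.
        (\<forall>z i. i < d \<longrightarrow> (\<Sum>e\<in>F. c e * rig_row p e z i) = 0) \<longrightarrow> (\<forall>e\<in>F. c e = 0))"

definition rig_rank :: "nat \<Rightarrow> 'a set \<Rightarrow> 'a set set \<Rightarrow> nat" where
  "rig_rank d V F =
     Max {card I | I. I \<subseteq> F \<and> rig_indep d (SOME p. generic d V p) I}"

definition rig_bridge :: "nat \<Rightarrow> 'a set \<Rightarrow> 'a set set \<Rightarrow> 'a set \<Rightarrow> bool" where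
  "rig_bridge d V E e \<longleftrightarrow> e \<in> E \<and> rig_rank d V (E - {e}) = rig_rank d V E - 1"

definition del_vertex_edges :: "'a set set \<Rightarrow> 'a \<Rightarrow> 'a set set" where
  "del_vertex_edges E w = {e \<in> E. w \<notin> e}"

end

theory Submission imports Defs "HOL-Analysis.Continuum_Not_Denumerable" "HOL-Analysis.Finite_Cartesian_Product" "Jordan_Normal_Form.Determinant"
begin

definition suppP :: "(('b \<Rightarrow> nat) \<Rightarrow> rat) \<Rightarrow> ('b \<Rightarrow> nat) set" where
  "suppP P = {m. P m \<noteq> 0}"

definition okP :: "'b set \<Rightarrow> (('b \<Rightarrow> nat) \<Rightarrow> rat) \<Rightarrow> bool" where
  "okP S P \<longleftrightarrow> finite (suppP P) \<and> (\<forall>m\<in>suppP P. \<forall>b. b \<notin> S \<longrightarrow> m b = 0)"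

definition monoP :: "'b set \<Rightarrow> ('b \<Rightarrow> real) \<Rightarrow> ('b \<Rightarrow> nat) \<Rightarrow> real" where
  "monoP S x m = (\<Prod>b\<in>S. x b ^ m b)"

definition evalP :: "'b set \<Rightarrow> (('b \<Rightarrow> nat) \<Rightarrow> rat) \<Rightarrow> ('b \<Rightarrow> real) \<Rightarrow> real" where
  "evalP S P x = (\<Sum>m\<in>suppP P. of_rat (P m) * monoP S x m)"

definition polyfun :: "'b set \<Rightarrow> (('b \<Rightarrow> real) \<Rightarrow> real) \<Rightarrow> bool" where
  "polyfun S f \<longleftrightarrow> (\<exists>P. okP S P \<and> (\<forall>x. f x = evalP S P x))"

lemma alg_indep_rat_alt:
  "alg_indep_rat S x \<longleftrightarrow> (\<forall>P. okP S P \<and> evalP S P x = 0 \<longrightarrow> (\<forall>m. P m = 0))"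
  unfolding alg_indep_rat_def okP_def evalP_def suppP_def monoP_def by auto

lemma evalP_superset:
  assumes "finite T" "suppP P \<subseteq> T"
  shows "evalP S P x = (\<Sum>m\<in>T. of_rat (P m) * monoP S x m)"
  unfolding evalP_def
  by (rule sum.mono_neutral_left[OF assms]) (auto simp: suppP_def)

lemma polyfun_generic:
  assumes "polyfun S f" "alg_indep_rat S x" "f y \<noteq> 0"
  shows "f x \<noteq> 0"
proof
  assume "f x = 0"
  from assms(1) obtain P where P: "okP S P" "\<And>x. f x = evalP S P x"
    unfolding polyfun_def by blast
  then have "\<forall>m. P m = 0" using assms(2) \<open>f x = 0\<close> unfolding alg_indep_rat_alt by auto
  then have "suppP P = {}" by (auto simp: suppP_def)
  then have "f y = 0" using P(2) by (simp add: evalP_def)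
  then show False using assms(3) by simp
qed

lemma polyfun_const: fixes S :: "'b set" shows "polyfun S (\<lambda>x. of_rat c)"
proof -
  define P where "P = (\<lambda>m::'b\<Rightarrow>nat. if m = (\<lambda>_. 0) then c else 0)"
  have s: "suppP P \<subseteq> {\<lambda>_. 0}" by (auto simp: suppP_def P_def)
  have "okP S P" unfolding okP_def using s finite_subset by auto
  moreover have "of_rat c = evalP S P x" for x
    by (subst evalP_superset[OF _ s]) (auto simp: P_def monoP_def)
  ultimately show ?thesis unfolding polyfun_def by blast
qed

lemma polyfun_var:
  fixes S :: "'b set"
  assumes "finite S" "b \<in> S"
  shows "polyfun S (\<lambda>x. x b)"
proof -
  define m0 where "m0 = (\<lambda>_. 0::nat)(b := 1)"
  define P where "P = (\<lambda>m::'b\<Rightarrow>nat. if m = m0 then 1 else (0::rat))"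
  have s: "suppP P \<subseteq> {m0}" by (auto simp: suppP_def P_def)
  have "okP S P" unfolding okP_def using s finite_subset assms by (auto simp: m0_def P_def suppP_def)
  moreover have "x b = evalP S P x" for x
  proof -
    have "monoP S x m0 = (\<Prod>s\<in>S. if s = b then x s else 1)"
      unfolding monoP_def m0_def by (rule prod.cong) auto
    also have "\<dots> = x b" using assms by (simp add: prod.delta)
    finally show ?thesis
      by (subst evalP_superset[OF _ s]) (auto simp: P_def)
  qed
  ultimately show ?thesis unfolding polyfun_def by blast
qed

lemma polyfun_add:
  fixes S :: "'b set"
  assumes "polyfun S f" "polyfun S g"
  shows "polyfun S (\<lambda>x. f x + g x)"
proof -
  obtain P where P: "okP S P" "\<And>x. f x = evalP S P x" using assms(1) unfolding polyfun_def by blast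
  obtain Q where Q: "okP S Q" "\<And>x. g x = evalP S Q x" using assms(2) unfolding polyfun_def by blast
  define R where "R = (\<lambda>m. P m + Q m)"
  define T where "T = suppP P \<union> suppP Q"
  have fT: "finite T" using P(1) Q(1) by (auto simp: okP_def T_def)
  have sR: "suppP R \<subseteq> T" by (auto simp: suppP_def R_def T_def)
  have "okP S R" using P(1) Q(1) fT sR unfolding okP_def
    by (auto simp: T_def R_def suppP_def intro: finite_subset)
  moreover have "f x + g x = evalP S R x" for x
  proof -
    have "evalP S R x = (\<Sum>m\<in>T. of_rat (R m) * monoP S x m)" by (rule evalP_superset[OF fT sR])
    moreover have "evalP S P x = (\<Sum>m\<in>T. of_rat (P m) * monoP S x m)" by (rule evalP_superset[OF fT]) (auto simp: T_def)
    moreover have "evalP S Q x = (\<Sum>m\<in>T. of_rat (Q m) * monoP S x m)" by (rule evalP_superset[OF fT]) (auto simp: T_def)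
    ultimately show ?thesis unfolding P(2) Q(2) R_def
      by (simp add: of_rat_add distrib_right sum.distrib)
  qed
  ultimately show ?thesis unfolding polyfun_def by blast
qed

definition madd :: "('b \<Rightarrow> nat) \<Rightarrow> ('b \<Rightarrow> nat) \<Rightarrow> ('b \<Rightarrow> nat)" where
  "madd m1 m2 = (\<lambda>b. m1 b + m2 b)"

lemma monoP_madd: "monoP S x (madd m1 m2) = monoP S x m1 * monoP S x m2"
  unfolding monoP_def madd_def by (simp add: power_add prod.distrib)

lemma polyfun_mult:
  fixes S :: "'b set"
  assumes "polyfun S f" "polyfun S g"
  shows "polyfun S (\<lambda>x. f x * g x)"
proof -
  obtain P where P: "okP S P" "\<And>x. f x = evalP S P x" using assms(1) unfolding polyfun_def by blast
  obtain Q where Q: "okP S Q" "\<And>x. g x = evalP S Q x" using assms(2) unfolding polyfun_def by blast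
  define A where "A = suppP P \<times> suppP Q"
  have "finite (suppP P)" "finite (suppP Q)" using P(1) Q(1) unfolding okP_def by blast+
  then have fA: "finite A" unfolding A_def by (rule finite_cartesian_product)
  define h where "h = (\<lambda>pr::('b\<Rightarrow>nat)\<times>('b\<Rightarrow>nat). madd (fst pr) (snd pr))"
  define R where "R = (\<lambda>m. \<Sum>pr\<in>{pr\<in>A. h pr = m}. P (fst pr) * Q (snd pr))"
  define T where "T = h ` A"
  have fT: "finite T" using fA by (simp add: T_def)
  have sR: "suppP R \<subseteq> T"
  proof
    fix m assume "m \<in> suppP R"
    then have "{pr\<in>A. h pr = m} \<noteq> {}" unfolding suppP_def R_def by force
    then show "m \<in> T" by (auto simp: T_def)
  qed
  have "okP S R" unfolding okP_def
  proof (intro conjI ballI allI impI)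
    show "finite (suppP R)" using fT sR finite_subset by blast
    fix m b assume m: "m \<in> suppP R" and b: "b \<notin> S"
    then have "m \<in> h ` A" using sR unfolding T_def by blast
    then obtain pr where "pr \<in> A" "m = h pr" by blast
    then have "fst pr \<in> suppP P" "snd pr \<in> suppP Q" by (auto simp: A_def)
    then have "fst pr b = 0" "snd pr b = 0" using P(1) Q(1) b unfolding okP_def by blast+
    then show "m b = 0" using \<open>m = h pr\<close> by (simp add: h_def madd_def)
  qed
  moreover have "f x * g x = evalP S R x" for x
  proof -
    have "evalP S R x = (\<Sum>m\<in>T. of_rat (R m) * monoP S x m)"
      by (rule evalP_superset[OF fT sR])
    also have "\<dots> = (\<Sum>m\<in>T. \<Sum>pr\<in>{pr\<in>A. h pr = m}. of_rat (P (fst pr)) * of_rat (Q (snd pr)) * monoP S x (h pr))"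
    proof (rule sum.cong[OF refl])
      fix m assume "m \<in> T"
      show "of_rat (R m) * monoP S x m = (\<Sum>pr\<in>{pr\<in>A. h pr = m}. of_rat (P (fst pr)) * of_rat (Q (snd pr)) * monoP S x (h pr))"
        unfolding R_def of_rat_sum sum_distrib_right by (rule sum.cong[OF refl]) (simp add: of_rat_mult)
    qed
    also have "\<dots> = (\<Sum>pr\<in>A. of_rat (P (fst pr)) * of_rat (Q (snd pr)) * monoP S x (h pr))"
      unfolding T_def by (rule sum.image_gen[OF fA, symmetric])
    also have "\<dots> = (\<Sum>pr\<in>A. (of_rat (P (fst pr)) * monoP S x (fst pr)) * (of_rat (Q (snd pr)) * monoP S x (snd pr)))"
      by (auto simp: h_def monoP_madd intro!: sum.cong)
    also have "\<dots> = evalP S P x * evalP S Q x"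
      unfolding A_def evalP_def sum_product sum.cartesian_product by (simp add: case_prod_beta)
    finally show ?thesis by (simp only: P(2) Q(2))
  qed
  ultimately show ?thesis unfolding polyfun_def by blast
qed

lemma polyfun_sum:
  fixes S :: "'b set"
  assumes "finite A" "\<And>a. a \<in> A \<Longrightarrow> polyfun S (f a)"
  shows "polyfun S (\<lambda>x. \<Sum>a\<in>A. f a x)"
  using assms
proof (induction A rule: finite_induct)
  case empty
  then show ?case using polyfun_const[of S 0] by simp
next
  case (insert a A)
  then show ?case by (simp add: polyfun_add)
qed

lemma polyfun_prod:
  fixes S :: "'b set"
  assumes "finite A" "\<And>a. a \<in> A \<Longrightarrow> polyfun S (f a)"
  shows "polyfun S (\<lambda>x. \<Prod>a\<in>A. f a x)"
  using assms
proof (induction A rule: finite_induct)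
  case empty
  then show ?case using polyfun_const[of S 1] by simp
next
  case (insert a A)
  then show ?case by (simp add: polyfun_mult)
qed

lemma polyfun_diff:
  fixes S :: "'b set"
  assumes "polyfun S f" "polyfun S g"
  shows "polyfun S (\<lambda>x. f x - g x)"
proof -
  have "polyfun S (\<lambda>x. f x + of_rat (-1) * g x)"
    by (intro polyfun_add polyfun_mult polyfun_const assms)
  then show ?thesis by (simp add: of_rat_minus)
qed

lemma polyfun_cong: "polyfun S f \<Longrightarrow> (\<And>x. f x = g x) \<Longrightarrow> polyfun S g"
  unfolding polyfun_def by auto


lemma alg_indep_empty: "alg_indep_rat {} x"
  unfolding alg_indep_rat_alt
proof (intro allI impI)
  fix P :: "('a \<Rightarrow> nat) \<Rightarrow> rat" and m
  assume a: "okP {} P \<and> evalP {} P x = 0"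
  have s: "suppP P \<subseteq> {\<lambda>_. 0}"
  proof
    fix m assume "m \<in> suppP P"
    then have "\<forall>b. m b = 0" using a unfolding okP_def by blast
    then show "m \<in> {\<lambda>_. 0}" by auto
  qed
  have "evalP {} P x = of_rat (P (\<lambda>_. 0))"
    by (subst evalP_superset[OF _ s]) (auto simp: monoP_def)
  then have "P (\<lambda>_. 0) = 0" using a by simp
  then have "suppP P = {}" using s by (auto simp: suppP_def)
  then show "P m = 0" by (auto simp: suppP_def)
qed

lemma roots_finite:
  fixes S :: "'b set"
  assumes fS: "finite S" and bS: "b \<notin> S" and ai: "alg_indep_rat S x"
    and ok: "okP (insert b S) P" and m0: "P m0 \<noteq> 0"
  shows "finite {t. evalP (insert b S) P (x(b:=t)) = 0}"
proof -
  define M where "M = suppP P"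
  have fM: "finite M" using ok by (simp add: okP_def M_def)
  have m0M: "m0 \<in> M" using m0 by (simp add: M_def suppP_def)
  define n where "n = Max ((\<lambda>m. m b) ` M)"
  define c where "c = (\<lambda>j. \<Sum>m\<in>{m\<in>M. m b = j}. of_rat (P m) * monoP S x m)"
  have mono_upd: "monoP (insert b S) (x(b:=t)) m = monoP S x m * t ^ m b" for t m
  proof -
    have "monoP (insert b S) (x(b:=t)) m = t ^ m b * (\<Prod>s\<in>S. (x(b:=t)) s ^ m s)"
      unfolding monoP_def using fS bS by simp
    also have "(\<Prod>s\<in>S. (x(b:=t)) s ^ m s) = monoP S x m"
      unfolding monoP_def using bS by (intro prod.cong) auto
    finally show ?thesis by (simp only: mult.commute)
  qed
  have ev: "evalP (insert b S) P (x(b:=t)) = (\<Sum>j\<le>n. c j * t ^ j)" for t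
  proof -
    have "evalP (insert b S) P (x(b:=t)) = (\<Sum>m\<in>M. of_rat (P m) * monoP S x m * t ^ m b)"
      unfolding evalP_def M_def mono_upd by (simp add: mult.assoc)
    also have "\<dots> = (\<Sum>j\<in>(\<lambda>m. m b) ` M. \<Sum>m\<in>{m\<in>M. m b = j}. of_rat (P m) * monoP S x m * t ^ m b)"
      by (rule sum.image_gen[OF fM])
    also have "\<dots> = (\<Sum>j\<in>(\<lambda>m. m b) ` M. c j * t ^ j)"
      unfolding c_def sum_distrib_right by (intro sum.cong refl) auto
    also have "\<dots> = (\<Sum>j\<le>n. c j * t ^ j)"
    proof (rule sum.mono_neutral_left)
      show "(\<lambda>m. m b) ` M \<subseteq> {..n}" using fM unfolding n_def by auto
      show "\<forall>i\<in>{..n} - (\<lambda>m. m b) ` M. c i * t ^ i = 0"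
      proof
        fix i assume "i \<in> {..n} - (\<lambda>m. m b) ` M"
        then have e: "{m\<in>M. m b = i} = {}" by auto
        have "c i = 0" unfolding c_def by (rule sum.neutral) (use e in blast)
        then show "c i * t ^ i = 0" by simp
      qed
    qed simp
    finally show ?thesis .
  qed
  define k where "k = m0 b"
  have kn: "k \<le> n" unfolding k_def n_def using fM m0M by auto
  have ck: "c k \<noteq> 0"
  proof
    assume ck0: "c k = 0"
    define Q where "Q = (\<lambda>m'::'b\<Rightarrow>nat. if (\<forall>s. s \<notin> S \<longrightarrow> m' s = 0) then P (m'(b:=k)) else 0)"
    define N where "N = {m\<in>M. m b = k}"
    have fN: "finite N" using fM by (simp add: N_def)
    have sQ: "suppP Q = (\<lambda>m. m(b:=0)) ` N"
    proof
      show "suppP Q \<subseteq> (\<lambda>m. m(b:=0)) ` N"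
      proof
        fix m' assume "m' \<in> suppP Q"
        then have h1: "\<forall>s. s \<notin> S \<longrightarrow> m' s = 0" and h2: "P (m'(b:=k)) \<noteq> 0"
          by (auto simp: suppP_def Q_def split: if_splits)
        have "m'(b:=k) \<in> N" using h2 by (simp add: N_def M_def suppP_def)
        moreover have "m' = (m'(b:=k))(b:=0)" using h1 bS by (auto simp: fun_eq_iff)
        ultimately show "m' \<in> (\<lambda>m. m(b:=0)) ` N" by blast
      qed
    next
      show "(\<lambda>m. m(b:=0)) ` N \<subseteq> suppP Q"
      proof
        fix m' assume "m' \<in> (\<lambda>m. m(b:=0)) ` N"
        then obtain m where m: "m \<in> N" "m' = m(b:=0)" by blast
        have supp: "\<forall>s. s \<notin> insert b S \<longrightarrow> m s = 0" using ok m(1) unfolding okP_def N_def M_def by blast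
        have "(m(b:=0))(b:=k) = m" using m(1) by (auto simp: N_def fun_eq_iff)
        then have "Q m' = P m" using supp m(2) by (auto simp: Q_def)
        then show "m' \<in> suppP Q" using m(1) by (simp add: N_def M_def suppP_def)
      qed
    qed
    have okQ: "okP S Q" unfolding okP_def
    proof
      show "finite (suppP Q)" unfolding sQ using fN by simp
      show "\<forall>m\<in>suppP Q. \<forall>b. b \<notin> S \<longrightarrow> m b = 0"
        unfolding suppP_def Q_def by (metis (mono_tags, lifting) mem_Collect_eq)
    qed
    have inj: "inj_on (\<lambda>m. m(b:=0)) N"
    proof (rule inj_onI)
      fix m1 m2 assume "m1 \<in> N" "m2 \<in> N" "m1(b:=0) = m2(b:=0)"
      then show "m1 = m2" unfolding N_def fun_eq_iff by (metis (mono_tags, lifting) fun_upd_apply mem_Collect_eq)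
    qed
    have "evalP S Q x = (\<Sum>m\<in>N. of_rat (Q (m(b:=0))) * monoP S x (m(b:=0)))"
      unfolding evalP_def sQ by (rule sum.reindex[OF inj, unfolded comp_def])
    also have "\<dots> = c k"
      unfolding c_def N_def
    proof (rule sum.cong[OF refl])
      fix m assume m: "m \<in> {m \<in> M. m b = k}"
      have supp: "\<forall>s. s \<notin> insert b S \<longrightarrow> m s = 0" using ok m unfolding okP_def M_def by blast
      have "(m(b:=0))(b:=k) = m" using m by (auto simp: fun_eq_iff)
      then have "Q (m(b:=0)) = P m" using supp by (auto simp: Q_def)
      moreover have "monoP S x (m(b:=0)) = monoP S x m"
        unfolding monoP_def using bS by (intro prod.cong) auto
      ultimately show "of_rat (Q (m(b:=0))) * monoP S x (m(b:=0)) = of_rat (P m) * monoP S x m" by simp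
    qed
    finally have "evalP S Q x = 0" using ck0 by simp
    then have "\<forall>m. Q m = 0" using ai okQ unfolding alg_indep_rat_alt by blast
    moreover have "m0(b:=0) \<in> suppP Q" unfolding sQ N_def using m0M k_def by auto
    ultimately show False by (simp add: suppP_def)
  qed
  have "finite {t. (\<Sum>j\<le>n. c j * t ^ j) = 0}"
    by (rule polyfun_roots_finite[of c k n, OF ck kn])
  then show ?thesis unfolding ev .
qed


lemma countable_mon:
  fixes S :: "'b set"
  assumes "finite S"
  shows "countable {m::'b\<Rightarrow>nat. \<forall>s. s \<notin> S \<longrightarrow> m s = 0}"
proof -
  have "{m::'b\<Rightarrow>nat. \<forall>s. s \<notin> S \<longrightarrow> m s = 0} \<subseteq> (\<lambda>g s. if s \<in> S then g s else 0) ` (Pi\<^sub>E S (\<lambda>_. UNIV))"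
  proof
    fix m :: "'b \<Rightarrow> nat" assume "m \<in> {m. \<forall>s. s \<notin> S \<longrightarrow> m s = 0}"
    then have "m = (\<lambda>s. if s \<in> S then restrict m S s else 0)" by (auto simp: fun_eq_iff)
    moreover have "restrict m S \<in> Pi\<^sub>E S (\<lambda>_. UNIV)" by simp
    ultimately show "m \<in> (\<lambda>g s. if s \<in> S then g s else 0) ` (Pi\<^sub>E S (\<lambda>_. UNIV))" by blast
  qed
  moreover have "countable ((\<lambda>g s. if s \<in> S then g s else 0) ` (Pi\<^sub>E S (\<lambda>_. UNIV::nat set)))"
    by (intro countable_image countable_PiE assms) simp
  ultimately show ?thesis by (rule countable_subset)
qed

lemma countable_polys:
  fixes S :: "'b set"
  assumes "finite S"
  shows "countable {P. okP S P}"
proof -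
  define Mon where "Mon = {m::'b\<Rightarrow>nat. \<forall>s. s \<notin> S \<longrightarrow> m s = 0}"
  define G where "G = (\<lambda>F::('b\<Rightarrow>nat) set. (\<lambda>g m. if m \<in> F then g m else (0::rat)) ` (Pi\<^sub>E F (\<lambda>_. UNIV)))"
  have "{P. okP S P} \<subseteq> (\<Union>F\<in>{F. finite F \<and> F \<subseteq> Mon}. G F)"
  proof
    fix P assume "P \<in> {P. okP S P}"
    then have ok: "okP S P" by simp
    have "P = (\<lambda>m. if m \<in> suppP P then restrict P (suppP P) m else 0)"
      by (auto simp: fun_eq_iff suppP_def)
    moreover have "restrict P (suppP P) \<in> Pi\<^sub>E (suppP P) (\<lambda>_. UNIV)" by simp
    ultimately have "P \<in> G (suppP P)" unfolding G_def by blast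
    moreover have "finite (suppP P) \<and> suppP P \<subseteq> Mon" using ok unfolding okP_def Mon_def by blast
    ultimately show "P \<in> (\<Union>F\<in>{F. finite F \<and> F \<subseteq> Mon}. G F)" by blast
  qed
  moreover have "countable (\<Union>F\<in>{F. finite F \<and> F \<subseteq> Mon}. G F)"
  proof (rule countable_UN)
    show "countable {F. finite F \<and> F \<subseteq> Mon}"
      by (rule countable_Collect_finite_subset) (unfold Mon_def, rule countable_mon[OF assms])
    fix F assume "F \<in> {F. finite F \<and> F \<subseteq> Mon}"
    then show "countable (G F)" unfolding G_def
      by (intro countable_image countable_PiE) auto
  qed
  ultimately show ?thesis by (rule countable_subset)
qed

lemma ex_alg_indep:
  fixes S :: "'b set"
  assumes "finite S"
  shows "\<exists>x. alg_indep_rat S x"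
  using assms
proof (induction S rule: finite_induct)
  case empty
  show ?case using alg_indep_empty by blast
next
  case (insert b S)
  then obtain x where ai: "alg_indep_rat S x" by blast
  define Bad where "Bad = (\<Union>P\<in>{P. okP (insert b S) P}. {t. (\<exists>m. P m \<noteq> 0) \<and> evalP (insert b S) P (x(b:=t)) = 0})"
  have "countable Bad" unfolding Bad_def
  proof (rule countable_UN)
    show "countable {P. okP (insert b S) P}" using insert(1) by (intro countable_polys) simp
    fix P assume P: "P \<in> {P. okP (insert b S) P}"
    show "countable {t. (\<exists>m. P m \<noteq> 0) \<and> evalP (insert b S) P (x(b:=t)) = 0}"
    proof (cases "\<exists>m. P m \<noteq> 0")
      case True
      then obtain m0 where "P m0 \<noteq> 0" by blast
      then have "finite {t. evalP (insert b S) P (x(b:=t)) = 0}"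
        using roots_finite[OF insert(1) insert(2) ai _ ] P by blast
      then show ?thesis by (intro countable_finite) (auto intro: finite_subset)
    next
      case False
      then show ?thesis by simp
    qed
  qed
  then have "Bad \<noteq> UNIV" using uncountable_UNIV_real by auto
  then obtain t where t: "t \<notin> Bad" by blast
  have "alg_indep_rat (insert b S) (x(b:=t))"
    unfolding alg_indep_rat_alt
  proof (intro allI impI)
    fix P m assume "okP (insert b S) P \<and> evalP (insert b S) P (x(b:=t)) = 0"
    then show "P m = 0" using t unfolding Bad_def by blast
  qed
  then show ?case by blast
qed


lemma quad:
  fixes v :: "'i \<Rightarrow> real"
  shows "(\<Sum>a\<in>A. \<Sum>b\<in>A. v a * (\<Sum>z\<in>Z. \<Sum>i\<in>D. r a z i * r b z i) * v b) = (\<Sum>z\<in>Z. \<Sum>i\<in>D. (\<Sum>a\<in>A. v a * r a z i)^2)"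
proof -
  have "(\<Sum>a\<in>A. \<Sum>b\<in>A. v a * (\<Sum>z\<in>Z. \<Sum>i\<in>D. r a z i * r b z i) * v b)
      = (\<Sum>a\<in>A. \<Sum>b\<in>A. \<Sum>z\<in>Z. \<Sum>i\<in>D. (v a * r a z i) * (v b * r b z i))"
    by (simp add: sum_distrib_left sum_distrib_right mult_ac)
  also have "\<dots> = (\<Sum>a\<in>A. \<Sum>z\<in>Z. \<Sum>b\<in>A. \<Sum>i\<in>D. (v a * r a z i) * (v b * r b z i))"
    by (rule sum.cong[OF refl], rule sum.swap)
  also have "\<dots> = (\<Sum>a\<in>A. \<Sum>z\<in>Z. \<Sum>i\<in>D. \<Sum>b\<in>A. (v a * r a z i) * (v b * r b z i))"
    by (rule sum.cong[OF refl], rule sum.cong[OF refl], rule sum.swap)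
  also have "\<dots> = (\<Sum>z\<in>Z. \<Sum>a\<in>A. \<Sum>i\<in>D. \<Sum>b\<in>A. (v a * r a z i) * (v b * r b z i))"
    by (rule sum.swap)
  also have "\<dots> = (\<Sum>z\<in>Z. \<Sum>i\<in>D. \<Sum>a\<in>A. \<Sum>b\<in>A. (v a * r a z i) * (v b * r b z i))"
    by (rule sum.cong[OF refl], rule sum.swap)
  also have "\<dots> = (\<Sum>z\<in>Z. \<Sum>i\<in>D. (\<Sum>a\<in>A. v a * r a z i)^2)"
    by (simp add: power2_eq_square sum_product)
  finally show ?thesis .
qed

definition gram :: "nat \<Rightarrow> 'a set \<Rightarrow> ('a \<Rightarrow> nat \<Rightarrow> real) \<Rightarrow> 'a set \<Rightarrow> 'a set \<Rightarrow> real" where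
  "gram d U p e f = (\<Sum>z\<in>U. \<Sum>i\<in>{0..<d}. rig_row p e z i * rig_row p f z i)"

definition GM :: "nat \<Rightarrow> 'a set \<Rightarrow> ('a \<Rightarrow> nat \<Rightarrow> real) \<Rightarrow> 'a set list \<Rightarrow> real mat" where
  "GM d U p xs = mat (length xs) (length xs) (\<lambda>(a,b). gram d U p (xs!a) (xs!b))"

lemma sum_nth_distinct:
  assumes "distinct xs"
  shows "(\<Sum>a\<in>{0..<length xs}. g (xs!a)) = (\<Sum>e\<in>set xs. g e)"
  using assms by (simp add: sum.distinct_set_conv_list sum_list_sum_nth)

lemma rig_row_out: "z \<notin> e \<Longrightarrow> rig_row p e z i = 0"
  by (simp add: rig_row_def)

lemma GM_mult:
  assumes "v \<in> carrier_vec (length xs)" "a < length xs"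
  shows "(GM d U p xs *\<^sub>v v) $ a = (\<Sum>b\<in>{0..<length xs}. gram d U p (xs!a) (xs!b) * v $ b)"
  using assms by (simp add: GM_def scalar_prod_def row_def)

lemma rig_indep_det:
  assumes fU: "finite U" and sub: "\<forall>e\<in>set xs. e \<subseteq> U" and dist: "distinct xs"
  shows "rig_indep d p (set xs) \<longleftrightarrow> det (GM d U p xs) \<noteq> 0"
proof -
  define k where "k = length xs"
  have carr: "GM d U p xs \<in> carrier_mat k k" by (simp add: GM_def k_def)
  have zero_out: "(\<Sum>e\<in>set xs. c e * rig_row p e z i) = 0" if "z \<notin> U" for c z i
  proof (intro sum.neutral ballI)
    fix e assume "e \<in> set xs"
    then have "z \<notin> e" using sub that by blast
    then show "c e * rig_row p e z i = 0" by (simp add: rig_row_out)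
  qed
  show ?thesis
  proof
    assume ri: "rig_indep d p (set xs)"
    show "det (GM d U p xs) \<noteq> 0"
    proof
      assume "det (GM d U p xs) = 0"
      then obtain v where v: "v \<in> carrier_vec k" "v \<noteq> 0\<^sub>v k" "GM d U p xs *\<^sub>v v = 0\<^sub>v k"
        using det_0_iff_vec_prod_zero[OF carr] by blast
      have "(\<Sum>a\<in>{0..<k}. v $ a * (GM d U p xs *\<^sub>v v) $ a) = 0"
        using v(3) by simp
      also have "(\<Sum>a\<in>{0..<k}. v $ a * (GM d U p xs *\<^sub>v v) $ a)
          = (\<Sum>a\<in>{0..<k}. \<Sum>b\<in>{0..<k}. v $ a * gram d U p (xs!a) (xs!b) * v $ b)"
        using v(1) by (intro sum.cong refl) (simp add: GM_mult k_def sum_distrib_left mult.assoc)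
      also have "\<dots> = (\<Sum>z\<in>U. \<Sum>i\<in>{0..<d}. (\<Sum>a\<in>{0..<k}. v $ a * rig_row p (xs!a) z i)^2)"
        unfolding gram_def by (rule quad)
      finally have sq: "(\<Sum>z\<in>U. \<Sum>i\<in>{0..<d}. (\<Sum>a\<in>{0..<k}. v $ a * rig_row p (xs!a) z i)^2) = 0" .
      define c where "c = (\<lambda>e. v $ (the_inv_into {0..<k} (\<lambda>a. xs!a) e))"
      have inj: "inj_on (\<lambda>a. xs!a) {0..<k}" using dist by (simp add: inj_on_def nth_eq_iff_index_eq k_def)
      have cnth: "c (xs!a) = v $ a" if "a < k" for a
        unfolding c_def using the_inv_into_f_f[OF inj] that by simp
      have rs: "(\<Sum>a\<in>{0..<k}. v $ a * rig_row p (xs!a) z i) = (\<Sum>e\<in>set xs. c e * rig_row p e z i)" for z i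
      proof -
        have "(\<Sum>a\<in>{0..<k}. v $ a * rig_row p (xs!a) z i) = (\<Sum>a\<in>{0..<k}. c (xs!a) * rig_row p (xs!a) z i)"
          by (intro sum.cong refl) (simp add: cnth)
        also have "\<dots> = (\<Sum>e\<in>set xs. c e * rig_row p e z i)"
          unfolding k_def by (rule sum_nth_distinct[OF dist])
        finally show ?thesis .
      qed
      have "\<forall>z i. i < d \<longrightarrow> (\<Sum>e\<in>set xs. c e * rig_row p e z i) = 0"
      proof (intro allI impI)
        fix z i assume "i < d"
        show "(\<Sum>e\<in>set xs. c e * rig_row p e z i) = 0"
        proof (cases "z \<in> U")
          case True
          have "(\<Sum>i\<in>{0..<d}. (\<Sum>a\<in>{0..<k}. v $ a * rig_row p (xs!a) z i)^2) = 0"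
            using sq fU True by (subst (asm) sum_nonneg_eq_0_iff) (auto intro: sum_nonneg)
          then have "(\<Sum>a\<in>{0..<k}. v $ a * rig_row p (xs!a) z i)^2 = 0"
            using \<open>i < d\<close> by (subst (asm) sum_nonneg_eq_0_iff) auto
          then show ?thesis using rs by simp
        next
          case False
          then show ?thesis by (rule zero_out)
        qed
      qed
      then have "\<forall>e\<in>set xs. c e = 0" using ri unfolding rig_indep_def by blast
      then have "v $ a = 0" if "a < k" for a using cnth[OF that] that by (simp add: k_def)
      then have "v = 0\<^sub>v k" using v(1) by (intro eq_vecI) auto
      then show False using v(2) by simp
    qed
  next
    assume dt: "det (GM d U p xs) \<noteq> 0"
    show "rig_indep d p (set xs)"
      unfolding rig_indep_def
    proof (intro allI impI)
      fix c :: "'a set \<Rightarrow> real"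
      assume c: "\<forall>z i. i < d \<longrightarrow> (\<Sum>e\<in>set xs. c e * rig_row p e z i) = 0"
      define v where "v = vec k (\<lambda>a. c (xs!a))"
      have vc: "v \<in> carrier_vec k" by (simp add: v_def)
      have "GM d U p xs *\<^sub>v v = 0\<^sub>v k"
      proof (rule eq_vecI)
        show "dim_vec (GM d U p xs *\<^sub>v v) = dim_vec (0\<^sub>v k)" using carr by simp
        fix a assume "a < dim_vec (0\<^sub>v k)"
        then have a: "a < k" by simp
        have "(GM d U p xs *\<^sub>v v) $ a = (\<Sum>b\<in>{0..<k}. gram d U p (xs!a) (xs!b) * c (xs!b))"
          using GM_mult[OF vc[unfolded k_def] a[unfolded k_def]] by (simp add: v_def k_def)
        also have "\<dots> = (\<Sum>z\<in>U. \<Sum>i\<in>{0..<d}. rig_row p (xs!a) z i * (\<Sum>b\<in>{0..<k}. c (xs!b) * rig_row p (xs!b) z i))"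
          unfolding gram_def by (simp add: sum_distrib_left sum_distrib_right mult_ac sum.swap[of _ "{0..<k}"])
        also have "\<dots> = 0"
        proof (intro sum.neutral ballI)
          fix z i assume "i \<in> {0..<d}"
          have "(\<Sum>b\<in>{0..<k}. c (xs!b) * rig_row p (xs!b) z i) = (\<Sum>e\<in>set xs. c e * rig_row p e z i)"
            unfolding k_def by (rule sum_nth_distinct[OF dist])
          also have "\<dots> = 0" using c \<open>i \<in> {0..<d}\<close> by simp
          finally show "rig_row p (xs!a) z i * (\<Sum>b\<in>{0..<k}. c (xs!b) * rig_row p (xs!b) z i) = 0" by simp
        qed
        finally show "(GM d U p xs *\<^sub>v v) $ a = 0\<^sub>v k $ a" using a by simp
      qed
      then have "v = 0\<^sub>v k" using dt det_0_iff_vec_prod_zero[OF carr] vc by blast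
      show "\<forall>e\<in>set xs. c e = 0"
      proof
        fix e assume "e \<in> set xs"
        then obtain a where a: "a < k" "e = xs!a" by (auto simp: in_set_conv_nth k_def)
        have "v $ a = 0" using \<open>v = 0\<^sub>v k\<close> a by simp
        then show "c e = 0" using a by (simp add: v_def)
      qed
    qed
  qed
qed


lemma polyfun_row:
  assumes fU: "finite U" and e: "e \<subseteq> U" "finite e" and z: "z \<in> U" and i: "i < d"
  shows "polyfun (U \<times> {..<d}) (\<lambda>x. rig_row (\<lambda>v j. x (v,j)) e z i)"
proof (cases "z \<in> e")
  case True
  have fS: "finite (U \<times> {..<d})" using fU by simp
  have "polyfun (U \<times> {..<d}) (\<lambda>x. \<Sum>w\<in>e - {z}. x (z,i) - x (w,i))"
  proof (intro polyfun_sum polyfun_diff polyfun_var fS)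
    show "finite (e - {z})" using e by simp
    show "(z, i) \<in> U \<times> {..<d}" using z i by simp
    fix w assume "w \<in> e - {z}"
    then show "(w, i) \<in> U \<times> {..<d}" using e i by auto
  qed
  then show ?thesis using True by (simp add: rig_row_def)
next
  case False
  show ?thesis using polyfun_const[of "U \<times> {..<d}" 0] False by (simp add: rig_row_def)
qed

lemma polyfun_gram:
  assumes fU: "finite U" and e: "e \<subseteq> U" "finite e" and f: "f \<subseteq> U" "finite f"
  shows "polyfun (U \<times> {..<d}) (\<lambda>x. gram d U (\<lambda>v j. x (v,j)) e f)"
  unfolding gram_def
  by (intro polyfun_sum polyfun_mult polyfun_row assms) auto

lemma polyfun_det:
  assumes fU: "finite U" and sub: "\<forall>e\<in>set xs. e \<subseteq> U \<and> finite e"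
  shows "polyfun (U \<times> {..<d}) (\<lambda>x. det (GM d U (\<lambda>v j. x (v,j)) xs))"
proof -
  define k where "k = length xs"
  define Perms where "Perms = {\<pi>. \<pi> permutes {0..<k}}"
  have eq: "det (GM d U (\<lambda>v j. x (v,j)) xs) =
     (\<Sum>\<pi>\<in>Perms. of_rat (of_int (sign \<pi>)) * (\<Prod>a\<in>{0..<k}. gram d U (\<lambda>v j. x (v,j)) (xs!a) (xs!(\<pi> a))))" for x
  proof -
    have "det (GM d U (\<lambda>v j. x (v,j)) xs) = (\<Sum>\<pi>\<in>Perms. of_int (sign \<pi>) * (\<Prod>a\<in>{0..<k}. GM d U (\<lambda>v j. x (v,j)) xs $$ (a, \<pi> a)))"
      unfolding det_def Perms_def k_def by (simp add: GM_def)
    also have "\<dots> = (\<Sum>\<pi>\<in>Perms. of_rat (of_int (sign \<pi>)) * (\<Prod>a\<in>{0..<k}. gram d U (\<lambda>v j. x (v,j)) (xs!a) (xs!(\<pi> a))))"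
    proof (intro sum.cong refl)
      fix \<pi> assume "\<pi> \<in> Perms"
      then have pm: "\<pi> permutes {0..<k}" by (simp add: Perms_def)
      have "(\<Prod>a\<in>{0..<k}. GM d U (\<lambda>v j. x (v,j)) xs $$ (a, \<pi> a)) = (\<Prod>a\<in>{0..<k}. gram d U (\<lambda>v j. x (v,j)) (xs!a) (xs!(\<pi> a)))"
      proof (intro prod.cong refl)
        fix a assume "a \<in> {0..<k}"
        then have "a < k" "\<pi> a < k" using permutes_in_image[OF pm] by auto
        then show "GM d U (\<lambda>v j. x (v,j)) xs $$ (a, \<pi> a) = gram d U (\<lambda>v j. x (v,j)) (xs!a) (xs!(\<pi> a))"
          by (simp add: GM_def k_def)
      qed
      then show "of_int (sign \<pi>) * (\<Prod>a\<in>{0..<k}. GM d U (\<lambda>v j. x (v,j)) xs $$ (a, \<pi> a)) =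
         of_rat (of_int (sign \<pi>)) * (\<Prod>a\<in>{0..<k}. gram d U (\<lambda>v j. x (v,j)) (xs!a) (xs!(\<pi> a)))"
        by (simp add: of_rat_of_int_eq)
    qed
    finally show ?thesis .
  qed
  have "polyfun (U \<times> {..<d}) (\<lambda>x. \<Sum>\<pi>\<in>Perms. of_rat (of_int (sign \<pi>)) * (\<Prod>a\<in>{0..<k}. gram d U (\<lambda>v j. x (v,j)) (xs!a) (xs!(\<pi> a))))"
  proof (intro polyfun_sum polyfun_mult polyfun_const polyfun_prod polyfun_gram fU)
    show "finite Perms" unfolding Perms_def by (rule finite_permutations) simp
    show "finite {0..<k}" by simp
    fix \<pi> a assume "\<pi> \<in> Perms" "a \<in> {0..<k}"
    then have "a < length xs" "\<pi> a < length xs" using permutes_in_image[of \<pi> "{0..<k}"] by (auto simp: Perms_def k_def)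
    then have "xs!a \<in> set xs" "xs!(\<pi> a) \<in> set xs" by auto
    then show "xs!a \<subseteq> U" "finite (xs!a)" "xs!(\<pi> a) \<subseteq> U" "finite (xs!(\<pi> a))" using sub by auto
  qed
  then show ?thesis by (rule polyfun_cong) (simp add: eq)
qed

lemma generic_transfer:
  assumes fU: "finite U" and gen: "generic d U p" and fI: "finite I"
    and sub: "\<forall>e\<in>I. e \<subseteq> U \<and> finite e" and ri: "rig_indep d r I"
  shows "rig_indep d p I"
proof -
  obtain xs where xs: "set xs = I" "distinct xs" using finite_distinct_list[OF fI] by blast
  have sub': "\<forall>e\<in>set xs. e \<subseteq> U" using sub xs by auto
  define D where "D = (\<lambda>x. det (GM d U (\<lambda>v j. x (v,j)) xs))"
  have pf: "polyfun (U \<times> {..<d}) D" unfolding D_def using polyfun_det[OF fU] sub xs by auto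
  have "D (\<lambda>(v,i). r v i) \<noteq> 0"
    using ri rig_indep_det[OF fU sub' xs(2), of d r] xs(1) by (simp add: D_def)
  then have "D (\<lambda>(v,i). p v i) \<noteq> 0"
    using polyfun_generic[OF pf] gen unfolding generic_def by blast
  then show ?thesis
    using rig_indep_det[OF fU sub' xs(2), of d p] xs(1) by (simp add: D_def)
qed


definition rk :: "nat \<Rightarrow> ('a \<Rightarrow> nat \<Rightarrow> real) \<Rightarrow> 'a set set \<Rightarrow> nat" where
  "rk d p F = Max {card I | I. I \<subseteq> F \<and> rig_indep d p I}"

lemma rig_rank_rk: "rig_rank d V F = rk d (SOME p. generic d V p) F"
  by (simp add: rig_rank_def rk_def)

lemma indep_empty: "rig_indep d p {}"
  by (simp add: rig_indep_def)

lemma indep_subset: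
  assumes "finite I" "I' \<subseteq> I" "rig_indep d p I"
  shows "rig_indep d p I'"
  unfolding rig_indep_def
proof (intro allI impI)
  fix c :: "'a set \<Rightarrow> real"
  assume c: "\<forall>z i. i < d \<longrightarrow> (\<Sum>e\<in>I'. c e * rig_row p e z i) = 0"
  define c' where "c' = (\<lambda>e. if e \<in> I' then c e else 0)"
  have "\<forall>z i. i < d \<longrightarrow> (\<Sum>e\<in>I. c' e * rig_row p e z i) = 0"
  proof (intro allI impI)
    fix z i assume "i < d"
    have "(\<Sum>e\<in>I. c' e * rig_row p e z i) = (\<Sum>e\<in>I'. c' e * rig_row p e z i)"
      using assms(1,2) by (intro sum.mono_neutral_right) (auto simp: c'_def)
    also have "\<dots> = (\<Sum>e\<in>I'. c e * rig_row p e z i)" by (intro sum.cong) (auto simp: c'_def)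
    finally show "(\<Sum>e\<in>I. c' e * rig_row p e z i) = 0" using c \<open>i < d\<close> by simp
  qed
  then have z: "\<forall>e\<in>I. c' e = 0" using assms(3) unfolding rig_indep_def by blast
  show "\<forall>e\<in>I'. c e = 0"
  proof
    fix e assume "e \<in> I'"
    then have "c' e = 0" using z assms(2) by blast
    then show "c e = 0" using \<open>e \<in> I'\<close> by (simp add: c'_def)
  qed
qed

lemma rk_set_finite:
  assumes "finite F"
  shows "finite {card I | I. I \<subseteq> F \<and> rig_indep d p I}"
proof -
  have "{card I | I. I \<subseteq> F \<and> rig_indep d p I} \<subseteq> {..card F}"
    using assms by (auto intro: card_mono)
  then show ?thesis by (rule finite_subset) simp
qed

lemma rk_ge:
  assumes "finite F" "I \<subseteq> F" "rig_indep d p I"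
  shows "card I \<le> rk d p F"
  unfolding rk_def using assms rk_set_finite[OF assms(1)] by (intro Max_ge) auto

lemma rk_ex:
  assumes "finite F"
  shows "\<exists>I. I \<subseteq> F \<and> rig_indep d p I \<and> card I = rk d p F"
proof -
  have ne: "{card I | I. I \<subseteq> F \<and> rig_indep d p I} \<noteq> {}" using indep_empty by blast
  have "rk d p F \<in> {card I | I. I \<subseteq> F \<and> rig_indep d p I}"
    unfolding rk_def by (rule Max_in[OF rk_set_finite[OF assms] ne])
  then show ?thesis by auto
qed

lemma rk_mono:
  assumes "finite F" "F' \<subseteq> F"
  shows "rk d p F' \<le> rk d p F"
proof -
  obtain I where "I \<subseteq> F'" "rig_indep d p I" "card I = rk d p F'"
    using rk_ex[of F' d p] assms finite_subset by blast
  then show ?thesis using rk_ge[OF assms(1), of I d p] assms by auto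
qed

lemma rk_del:
  assumes "finite F"
  shows "rk d p F - 1 \<le> rk d p (F - {e})"
proof -
  obtain I where I: "I \<subseteq> F" "rig_indep d p I" "card I = rk d p F"
    using rk_ex[OF assms] by blast
  have fI: "finite I" using I(1) assms finite_subset by blast
  have "rig_indep d p (I - {e})" using indep_subset[OF fI _ I(2)] by blast
  then have "card (I - {e}) \<le> rk d p (F - {e})" using I(1) assms by (intro rk_ge) auto
  moreover have "card I - 1 \<le> card (I - {e})" using fI by (simp add: diff_le_mono card_Diff_singleton_if)
  ultimately show ?thesis using I(3) by simp
qed

definition in_span :: "nat \<Rightarrow> ('a \<Rightarrow> nat \<Rightarrow> real) \<Rightarrow> 'a set set \<Rightarrow> 'a set \<Rightarrow> bool" where
  "in_span d p K g \<longleftrightarrow> (\<exists>c. \<forall>z i. i < d \<longrightarrow> rig_row p g z i = (\<Sum>f\<in>K. c f * rig_row p f z i))"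

lemma span_S1:
  assumes fK: "finite K" and ind: "rig_indep d p K" and nind: "\<not> rig_indep d p (insert g K)" and gK: "g \<notin> K"
  shows "in_span d p K g"
proof -
  obtain c where c: "\<forall>z i. i < d \<longrightarrow> (\<Sum>e\<in>insert g K. c e * rig_row p e z i) = 0"
    and ne: "\<exists>e\<in>insert g K. c e \<noteq> 0"
    using nind unfolding rig_indep_def by blast
  have c2: "c g * rig_row p g z i + (\<Sum>e\<in>K. c e * rig_row p e z i) = 0" if "i < d" for z i
    using c that fK gK by simp
  have cg: "c g \<noteq> 0"
  proof
    assume "c g = 0"
    then have "\<forall>z i. i < d \<longrightarrow> (\<Sum>e\<in>K. c e * rig_row p e z i) = 0" using c2 by simp
    then have "\<forall>e\<in>K. c e = 0" using ind unfolding rig_indep_def by blast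
    then show False using ne \<open>c g = 0\<close> by auto
  qed
  have "\<forall>z i. i < d \<longrightarrow> rig_row p g z i = (\<Sum>f\<in>K. (- c f / c g) * rig_row p f z i)"
  proof (intro allI impI)
    fix z i assume "i < d"
    have s: "(\<Sum>f\<in>K. c f * rig_row p f z i) = - (c g * rig_row p g z i)"
      using c2[OF \<open>i < d\<close>, of z] by linarith
    have "(\<Sum>f\<in>K. (- c f / c g) * rig_row p f z i) = (- 1 / c g) * (\<Sum>f\<in>K. c f * rig_row p f z i)"
      by (subst sum_distrib_left) (intro sum.cong refl, simp add: field_simps cg)
    also have "\<dots> = rig_row p g z i" unfolding s using cg by (simp add: field_simps)
    finally show "rig_row p g z i = (\<Sum>f\<in>K. (- c f / c g) * rig_row p f z i)" by simp
  qed
  then show ?thesis unfolding in_span_def by (intro exI[of _ "\<lambda>f. - c f / c g"]) blast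
qed

lemma span_triv:
  assumes "finite K" "f \<in> K"
  shows "in_span d p K f"
proof -
  have "rig_row p f z i = (\<Sum>h\<in>K. (if h = f then 1 else 0) * rig_row p h z i)" for z i
  proof -
    have "(\<Sum>h\<in>K. (if h = f then 1 else 0) * rig_row p h z i) = (\<Sum>h\<in>K. if h = f then rig_row p h z i else 0)"
      by (intro sum.cong) auto
    also have "\<dots> = rig_row p f z i" using assms by (simp add: sum.delta)
    finally show ?thesis by simp
  qed
  then show ?thesis unfolding in_span_def by (intro exI[of _ "\<lambda>h. if h = f then 1 else 0"]) blast
qed

lemma span_trans:
  assumes fK: "finite K" and fI: "finite I" and all: "\<forall>f\<in>K. in_span d p I f" and g: "in_span d p K g"
  shows "in_span d p I g"
proof -
  from all have "\<forall>f\<in>K. \<exists>c. \<forall>z i. i < d \<longrightarrow> rig_row p f z i = (\<Sum>h\<in>I. c h * rig_row p h z i)"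
    unfolding in_span_def by blast
  then obtain B where B: "\<forall>f\<in>K. \<forall>z i. i < d \<longrightarrow> rig_row p f z i = (\<Sum>h\<in>I. B f h * rig_row p h z i)"
    by (metis bchoice)
  obtain a where a: "\<forall>z i. i < d \<longrightarrow> rig_row p g z i = (\<Sum>f\<in>K. a f * rig_row p f z i)"
    using g unfolding in_span_def by blast
  have "\<forall>z i. i < d \<longrightarrow> rig_row p g z i = (\<Sum>h\<in>I. (\<Sum>f\<in>K. a f * B f h) * rig_row p h z i)"
  proof (intro allI impI)
    fix z i assume "i < d"
    have "rig_row p g z i = (\<Sum>f\<in>K. a f * (\<Sum>h\<in>I. B f h * rig_row p h z i))"
      using a B \<open>i < d\<close> by (auto intro: sum.cong)
    also have "\<dots> = (\<Sum>f\<in>K. \<Sum>h\<in>I. a f * B f h * rig_row p h z i)"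
      by (simp add: sum_distrib_left mult.assoc)
    also have "\<dots> = (\<Sum>h\<in>I. \<Sum>f\<in>K. a f * B f h * rig_row p h z i)"
      by (rule sum.swap)
    also have "\<dots> = (\<Sum>h\<in>I. (\<Sum>f\<in>K. a f * B f h) * rig_row p h z i)"
      by (simp add: sum_distrib_right)
    finally show "rig_row p g z i = (\<Sum>h\<in>I. (\<Sum>f\<in>K. a f * B f h) * rig_row p h z i)" .
  qed
  then show ?thesis unfolding in_span_def by (rule exI[of _ "\<lambda>h. \<Sum>f\<in>K. a f * B f h"])
qed

lemma span_S3:
  assumes fI: "finite I" and ind: "rig_indep d p I" and eI: "e \<in> I"
  shows "\<not> in_span d p (I - {e}) e"
proof
  assume "in_span d p (I - {e}) e"
  then obtain c where c: "\<forall>z i. i < d \<longrightarrow> rig_row p e z i = (\<Sum>f\<in>I - {e}. c f * rig_row p f z i)"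
    unfolding in_span_def by blast
  define c' where "c' = c(e := -1)"
  have "\<forall>z i. i < d \<longrightarrow> (\<Sum>f\<in>I. c' f * rig_row p f z i) = 0"
  proof (intro allI impI)
    fix z i assume "i < d"
    have "(\<Sum>f\<in>I. c' f * rig_row p f z i) = c' e * rig_row p e z i + (\<Sum>f\<in>I - {e}. c' f * rig_row p f z i)"
      using fI eI by (simp add: sum.remove)
    also have "(\<Sum>f\<in>I - {e}. c' f * rig_row p f z i) = (\<Sum>f\<in>I - {e}. c f * rig_row p f z i)"
      by (intro sum.cong) (auto simp: c'_def)
    finally show "(\<Sum>f\<in>I. c' f * rig_row p f z i) = 0" using c \<open>i < d\<close> by (simp add: c'_def)
  qed
  then have "c' e = 0" using ind eI unfolding rig_indep_def by blast
  then show False by (simp add: c'_def)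
qed

lemma exchange:
  assumes fF: "finite F" and eF: "e \<in> F" and KF: "K \<subseteq> F - {e}" and indK: "rig_indep d p K"
    and nind: "\<not> rig_indep d p (insert e K)"
  shows "rk d p (F - {e}) = rk d p F"
proof -
  have fK: "finite K" using KF fF finite_subset by blast
  obtain I where I: "I \<subseteq> F" "rig_indep d p I" "card I = rk d p F"
    using rk_ex[OF fF] by blast
  have fI: "finite I" using I(1) fF finite_subset by blast
  have le: "rk d p (F - {e}) \<le> rk d p F" using fF by (intro rk_mono) auto
  show ?thesis
  proof (cases "e \<in> I")
    case False
    then have "card I \<le> rk d p (F - {e})" using I fF by (intro rk_ge) auto
    then show ?thesis using le I(3) by simp
  next
    case True
    define I0 where "I0 = I - {e}"
    have fI0: "finite I0" using fI by (simp add: I0_def)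
    have ind0: "rig_indep d p I0" using indep_subset[OF fI _ I(2)] by (auto simp: I0_def)
    have eK: "e \<notin> K" using KF by blast
    have "\<exists>f\<in>K. f \<notin> I0 \<and> \<not> in_span d p I0 f"
    proof (rule ccontr)
      assume "\<not> ?thesis"
      then have "\<forall>f\<in>K. in_span d p I0 f" using span_triv[OF fI0] by blast
      moreover have "in_span d p K e" by (rule span_S1[OF fK indK nind eK])
      ultimately have "in_span d p I0 e" by (rule span_trans[OF fK fI0])
      then show False using span_S3[OF fI I(2) True] by (simp add: I0_def)
    qed
    then obtain f where f: "f \<in> K" "f \<notin> I0" "\<not> in_span d p I0 f" by blast
    have indf: "rig_indep d p (insert f I0)"
      using span_S1[OF fI0 ind0 _ f(2)] f(3) by blast
    have sub: "insert f I0 \<subseteq> F - {e}" using f(1) KF I(1) by (auto simp: I0_def)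
    have "card (insert f I0) = card I"
      using fI0 f(2) True fI by (simp add: I0_def card_Diff_singleton)
        (metis One_nat_def Suc_pred card_gt_0_iff empty_iff)
    then have "card I \<le> rk d p (F - {e})" using rk_ge[OF _ sub indf] fF by simp
    then show ?thesis using le I(3) by simp
  qed
qed

lemma nonbridge_dep:
  assumes fF: "finite F" and eF: "e \<in> F" and eq: "rk d p (F - {e}) = rk d p F"
  shows "\<exists>K. K \<subseteq> F - {e} \<and> rig_indep d p K \<and> \<not> rig_indep d p (insert e K)"
proof -
  obtain K where K: "K \<subseteq> F - {e}" "rig_indep d p K" "card K = rk d p (F - {e})"
    using rk_ex[of "F - {e}" d p] fF by blast
  have fK: "finite K" using K(1) fF finite_subset by blast
  have "\<not> rig_indep d p (insert e K)"
  proof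
    assume "rig_indep d p (insert e K)"
    then have "card (insert e K) \<le> rk d p F" using K(1) eF fF by (intro rk_ge) auto
    moreover have "card (insert e K) = card K + 1" using fK K(1) by (subst card_insert_disjoint) auto
    ultimately show False using K(3) eq by simp
  qed
  then show ?thesis using K by blast
qed


lemma row_transport:
  assumes inj: "inj_on \<psi> U" and eU: "e \<subseteq> U" and zU: "z \<in> U"
    and ag: "\<forall>y\<in>U. \<forall>i. r (\<psi> y) i = q y i"
  shows "rig_row r (\<psi> ` e) (\<psi> z) i = rig_row q e z i"
proof -
  have iff: "\<psi> z \<in> \<psi> ` e \<longleftrightarrow> z \<in> e" using inj eU zU by (auto dest: inj_onD)
  have img: "\<psi> ` e - {\<psi> z} = \<psi> ` (e - {z})" using inj eU zU by (auto dest: inj_onD)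
  have inj2: "inj_on \<psi> (e - {z})" using inj eU by (auto intro: inj_on_subset)
  have "(\<Sum>w\<in>\<psi> ` (e - {z}). r (\<psi> z) i - r w i) = (\<Sum>w\<in>e - {z}. r (\<psi> z) i - r (\<psi> w) i)"
    by (rule sum.reindex[OF inj2, unfolded comp_def])
  also have "\<dots> = (\<Sum>w\<in>e - {z}. q z i - q w i)"
    using ag eU zU by (intro sum.cong refl) auto
  finally show ?thesis unfolding rig_row_def iff img by simp
qed

lemma indep_transport:
  assumes inj: "inj_on \<psi> U" and sub: "\<forall>e\<in>J. e \<subseteq> U" and fJ: "finite J"
    and ag: "\<forall>y\<in>U. \<forall>i. r (\<psi> y) i = q y i"
  shows "rig_indep d r ((\<lambda>e. \<psi> ` e) ` J) \<longleftrightarrow> rig_indep d q J"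
proof -
  have injJ: "inj_on (\<lambda>e. \<psi> ` e) J"
    using inj sub by (auto simp: inj_on_def inj_on_image_eq_iff)
  have zero_q: "rig_row q e z i = 0" if "e \<in> J" "z \<notin> U" for e z i
    using sub that by (intro rig_row_out) blast
  have zero_r: "rig_row r (\<psi> ` e) z' i = 0" if "e \<in> J" "z' \<notin> \<psi> ` U" for e z' i
    using sub that by (intro rig_row_out) blast
  show ?thesis
  proof
    assume ri: "rig_indep d r ((\<lambda>e. \<psi> ` e) ` J)"
    show "rig_indep d q J" unfolding rig_indep_def
    proof (intro allI impI)
      fix c
      assume c: "\<forall>z i. i < d \<longrightarrow> (\<Sum>e\<in>J. c e * rig_row q e z i) = 0"
      define c' where "c' = (\<lambda>e'. c (the_inv_into J (\<lambda>e. \<psi> ` e) e'))"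
      have c'e: "c' (\<psi> ` e) = c e" if "e \<in> J" for e
        unfolding c'_def using the_inv_into_f_f[OF injJ that] by simp
      have "\<forall>z' i. i < d \<longrightarrow> (\<Sum>e'\<in>(\<lambda>e. \<psi> ` e) ` J. c' e' * rig_row r e' z' i) = 0"
      proof (intro allI impI)
        fix z' i assume "i < d"
        have "(\<Sum>e'\<in>(\<lambda>e. \<psi> ` e) ` J. c' e' * rig_row r e' z' i) = (\<Sum>e\<in>J. c e * rig_row r (\<psi> ` e) z' i)"
          by (subst sum.reindex[OF injJ]) (auto simp: c'e intro: sum.cong)
        also have "\<dots> = 0"
        proof (cases "z' \<in> \<psi> ` U")
          case True
          then obtain z where z: "z \<in> U" "z' = \<psi> z" by blast
          have "(\<Sum>e\<in>J. c e * rig_row r (\<psi> ` e) z' i) = (\<Sum>e\<in>J. c e * rig_row q e z i)"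
            using row_transport[OF inj _ z(1) ag] sub z(2) by (intro sum.cong) auto
          then show ?thesis using c \<open>i < d\<close> by simp
        next
          case False
          then show ?thesis using zero_r by (intro sum.neutral) auto
        qed
        finally show "(\<Sum>e'\<in>(\<lambda>e. \<psi> ` e) ` J. c' e' * rig_row r e' z' i) = 0" .
      qed
      then have "\<forall>e'\<in>(\<lambda>e. \<psi> ` e) ` J. c' e' = 0" using ri unfolding rig_indep_def by blast
      then show "\<forall>e\<in>J. c e = 0" using c'e by auto
    qed
  next
    assume ri: "rig_indep d q J"
    show "rig_indep d r ((\<lambda>e. \<psi> ` e) ` J)" unfolding rig_indep_def
    proof (intro allI impI)
      fix c'
      assume c': "\<forall>z i. i < d \<longrightarrow> (\<Sum>e'\<in>(\<lambda>e. \<psi> ` e) ` J. c' e' * rig_row r e' z i) = 0"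
      define c where "c = (\<lambda>e. c' (\<psi> ` e))"
      have "\<forall>z i. i < d \<longrightarrow> (\<Sum>e\<in>J. c e * rig_row q e z i) = 0"
      proof (intro allI impI)
        fix z i assume "i < d"
        show "(\<Sum>e\<in>J. c e * rig_row q e z i) = 0"
        proof (cases "z \<in> U")
          case True
          have "(\<Sum>e\<in>J. c e * rig_row q e z i) = (\<Sum>e\<in>J. c' (\<psi> ` e) * rig_row r (\<psi> ` e) (\<psi> z) i)"
            using row_transport[OF inj _ True ag] sub by (auto simp: c_def intro: sum.cong)
          also have "\<dots> = (\<Sum>e'\<in>(\<lambda>e. \<psi> ` e) ` J. c' e' * rig_row r e' (\<psi> z) i)"
            by (subst sum.reindex[OF injJ]) simp
          also have "\<dots> = 0" using c' \<open>i < d\<close> by blast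
          finally show ?thesis .
        next
          case False
          then show ?thesis using zero_q by (intro sum.neutral) auto
        qed
      qed
      then have "\<forall>e\<in>J. c e = 0" using ri unfolding rig_indep_def by blast
      then show "\<forall>e'\<in>(\<lambda>e. \<psi> ` e) ` J. c' e' = 0" by (auto simp: c_def)
    qed
  qed
qed

lemma some_generic:
  assumes "finite V"
  shows "generic d V (SOME p. generic d V p)"
proof -
  obtain x where x: "alg_indep_rat (V \<times> {..<d}) x" using ex_alg_indep[of "V \<times> {..<d}"] assms by auto
  have "generic d V (\<lambda>v i. x (v, i))" unfolding generic_def using x by (simp add: case_prod_beta')
  then show ?thesis by (rule someI[where P="generic d V"])
qed


theorem proposition2p7:
  fixes V :: "'a set" and E :: "'a set set" and d :: nat and u v w :: 'a
  assumes "simple_graph V E"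
    and "d \<ge> 1"
    and "u \<in> V" "v \<in> V" "w \<in> V"
    and "u \<noteq> v" "u \<noteq> w" "v \<noteq> w"
    and "u \<in> nbhd E v"
    and "nbhd E v \<subseteq> nbhd E w \<union> {w}"
    and "rig_bridge d V E {u, w}"
  shows "rig_bridge d (V - {w}) (del_vertex_edges E w) {u, v}"
proof -
  note sg = assms(1) and d1 = assms(2) and uV = assms(3) and vV = assms(4) and wV = assms(5)
    and uv = assms(6) and uw = assms(7) and vw = assms(8) and unb = assms(9) and nbsub = assms(10)
    and bridge = assms(11)
  define p where "p = (SOME p. generic d V p)"
  define V' where "V' = V - {w}"
  define q where "q = (SOME p. generic d V' p)"
  define E' where "E' = del_vertex_edges E w"
  have fV: "finite V" using sg by (simp add: simple_graph_def)
  have fV': "finite V'" using fV by (simp add: V'_def)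
  have edge: "\<exists>a b. a \<noteq> b \<and> a \<in> V \<and> b \<in> V \<and> e = {a, b}" if "e \<in> E" for e
    using sg that by (simp add: simple_graph_def)
  have Esub: "\<forall>e\<in>E. e \<subseteq> V \<and> finite e" using edge by fastforce
  have fE: "finite E"
  proof -
    have "E \<subseteq> Pow V" using Esub by auto
    then show ?thesis using fV by (simp add: finite_subset)
  qed
  have E'E: "E' \<subseteq> E" by (auto simp: E'_def del_vertex_edges_def)
  have fE': "finite E'" using fE E'E finite_subset by blast
  have E'sub: "\<forall>e\<in>E'. e \<subseteq> V' \<and> finite e" using Esub by (auto simp: E'_def V'_def del_vertex_edges_def)
  have genp: "generic d V p" unfolding p_def by (rule some_generic[OF fV])
  have genq: "generic d V' q" unfolding q_def by (rule some_generic[OF fV'])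
  have uvE: "{u, v} \<in> E" using unb by (simp add: nbhd_def insert_commute)
  have uvE': "{u, v} \<in> E'" using uvE uw vw by (auto simp: E'_def del_vertex_edges_def)
  have uwE: "{u, w} \<in> E" and br: "rk d p (E - {{u, w}}) = rk d p E - 1"
    using bridge by (simp_all add: rig_bridge_def rig_rank_rk p_def)
  have main: "rk d q (E' - {{u, v}}) = rk d q E' - 1"
  proof (rule ccontr)
    assume ne: "rk d q (E' - {{u, v}}) \<noteq> rk d q E' - 1"
    have "rk d q E' - 1 \<le> rk d q (E' - {{u, v}})" by (rule rk_del[OF fE'])
    moreover have "rk d q (E' - {{u, v}}) \<le> rk d q E'" using fE' by (intro rk_mono) auto
    ultimately have eq: "rk d q (E' - {{u, v}}) = rk d q E'" using ne by linarith
    obtain K where K: "K \<subseteq> E' - {{u, v}}" "rig_indep d q K" "\<not> rig_indep d q (insert {u, v} K)"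
      using nonbridge_dep[OF fE' uvE' eq] by blast
    have fK: "finite K" using K(1) fE' finite_subset by blast
    define \<psi> where "\<psi> = (\<lambda>z. if z = v then w else z)"
    have inj: "inj_on \<psi> V'" unfolding inj_on_def \<psi>_def V'_def by auto
    have Ksub: "\<forall>e\<in>K. e \<subseteq> V'" using K(1) E'sub by blast
    define K' where "K' = (\<lambda>e. \<psi> ` e) ` K"
    have fK': "finite K'" using fK by (simp add: K'_def)
    have psiV: "\<psi> ` V' \<subseteq> V" using wV by (auto simp: \<psi>_def V'_def)
    have K'sub: "\<forall>e\<in>K'. e \<subseteq> V \<and> finite e"
    proof
      fix e assume "e \<in> K'"
      then obtain f where f: "f \<in> K" "e = \<psi> ` f" by (auto simp: K'_def)
      then have "f \<subseteq> V'" "finite f" using K(1) E'sub by blast+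
      then show "e \<subseteq> V \<and> finite e" using f psiV by auto
    qed
    define r0 where "r0 = (\<lambda>z. if z = w then q v else q z)"
    have ag0: "\<forall>y\<in>V'. \<forall>i. r0 (\<psi> y) i = q y i" by (auto simp: r0_def \<psi>_def V'_def)
    have "rig_indep d r0 K'" unfolding K'_def using indep_transport[OF inj Ksub fK ag0] K(2) by blast
    then have indK': "rig_indep d p K'" by (rule generic_transfer[OF fV genp fK' K'sub])
    have img: "insert {u, w} K' = (\<lambda>e. \<psi> ` e) ` (insert {u, v} K)"
      using uv by (auto simp: K'_def \<psi>_def)
    have nindK': "\<not> rig_indep d p (insert {u, w} K')"
    proof
      assume ind: "rig_indep d p (insert {u, w} K')"
      define q1 where "q1 = (\<lambda>z i. p (\<psi> z) i)"
      have ag1: "\<forall>y\<in>V'. \<forall>i. p (\<psi> y) i = q1 y i" by (simp add: q1_def)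
      have sub1: "\<forall>e\<in>insert {u, v} K. e \<subseteq> V'" using Ksub uvE' E'sub by blast
      have sub2: "\<forall>e\<in>insert {u, v} K. e \<subseteq> V' \<and> finite e" using K(1) uvE' E'sub by blast
      have "rig_indep d q1 (insert {u, v} K)"
        using indep_transport[OF inj sub1 _ ag1] fK ind img by simp
      then have "rig_indep d q (insert {u, v} K)"
        using generic_transfer[OF fV' genq _ sub2] fK by blast
      then show False using K(3) by blast
    qed
    have K'E: "K' \<subseteq> E - {{u, w}}"
    proof
      fix e assume "e \<in> K'"
      then obtain f where f: "f \<in> K" "e = \<psi> ` f" by (auto simp: K'_def)
      have fE'': "f \<in> E" "w \<notin> f" "f \<noteq> {u, v}" using f(1) K(1) by (auto simp: E'_def del_vertex_edges_def)
      obtain a b where ab: "a \<noteq> b" "a \<in> V" "b \<in> V" "f = {a, b}" using edge[OF fE''(1)] by blast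
      show "e \<in> E - {{u, w}}"
      proof (cases "v \<in> f")
        case True
        obtain x where x: "f = {v, x}" "x \<noteq> v" using True ab by blast
        have xw: "x \<noteq> w" using x fE''(2) by blast
        have e_eq: "e = {w, x}" using f(2) x by (auto simp: \<psi>_def)
        have "x \<in> nbhd E v" using fE''(1) x by (simp add: nbhd_def)
        then have "x \<in> nbhd E w" using nbsub xw by blast
        then have "{w, x} \<in> E" by (simp add: nbhd_def)
        moreover have "{w, x} \<noteq> {u, w}"
        proof
          assume "{w, x} = {u, w}"
          then have "x = u" using xw by (auto simp: doubleton_eq_iff)
          then show False using fE''(3) x by (auto simp: insert_commute)
        qed
        ultimately show ?thesis using e_eq by simp
      next
        case False
        then have "e = f" using f(2) by (auto simp: \<psi>_def)
        then show ?thesis using fE'' by auto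
      qed
    qed
    have "rk d p (E - {{u, w}}) = rk d p E" by (rule exchange[OF fE uwE K'E indK' nindK'])
    with br have rk0: "rk d p E = 0" by linarith
    define F where "F = (\<lambda>x::'a \<times> nat \<Rightarrow> real. x (u, 0) - x (w, 0))"
    have pfF: "polyfun (V \<times> {..<d}) F"
      unfolding F_def using fV uV wV d1 by (intro polyfun_diff polyfun_var) auto
    have aiF: "alg_indep_rat (V \<times> {..<d}) (\<lambda>(v, i). p v i)" using genp by (simp add: generic_def)
    have y0: "F (\<lambda>(a, i). if a = u then 1 else 0) \<noteq> 0" using uw by (simp add: F_def)
    have "F (\<lambda>(v, i). p v i) \<noteq> 0" by (rule polyfun_generic[where f=F and x="\<lambda>(v, i). p v i", OF pfF aiF y0])
    then have "p u 0 - p w 0 \<noteq> 0" by (simp add: F_def)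
    then have puw: "p u 0 - p w 0 \<noteq> 0" by simp
    have "rig_indep d p {{u, w}}"
      unfolding rig_indep_def
    proof (intro allI impI)
      fix c :: "'a set \<Rightarrow> real"
      assume "\<forall>z i. i < d \<longrightarrow> (\<Sum>e\<in>{{u, w}}. c e * rig_row p e z i) = 0"
      then have "c {u, w} * rig_row p {u, w} u 0 = 0" using d1 by auto
      moreover have "rig_row p {u, w} u 0 = p u 0 - p w 0"
      proof -
        have "{u, w} - {u} = {w}" using uw by auto
        then show ?thesis by (simp add: rig_row_def)
      qed
      ultimately show "\<forall>e\<in>{{u, w}}. c e = 0" using puw by simp
    qed
    then have "card {{u, w}} \<le> rk d p E" using fE uwE by (intro rk_ge) auto
    then show False using rk0 by simp
  qed
  show ?thesis
    unfolding rig_bridge_def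
  proof
    show "{u, v} \<in> del_vertex_edges E w" using uvE' by (simp add: E'_def)
    show "rig_rank d (V - {w}) (del_vertex_edges E w - {{u, v}}) = rig_rank d (V - {w}) (del_vertex_edges E w) - 1"
      using main by (simp add: rig_rank_rk q_def V'_def E'_def)
  qed
qed

end
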